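(* Let $\phi=\frac{1+\sqrt5}{2}$ be the golden ratio. For every $\epsilon>0$ there exists a (weighted) instance of the atomic two-stage facility location game that admits no $(\phi-\epsilon)$-approximate subgame perfect equilibrium.
   Context: Atomic two-stage facility location game. An instance is a triple $(H,U,k)$: $H=(V,E,w)$ is a finite directed graph with vertex weights $w:V\to\mathbb{Q}_{>0}$; $F$ is a set of $k$ facility agents; $U:F\to 2^V$ assigns to each facility agent $f$ a set $U(f)\subseteq V$ of feasible locations. The vertices are simultaneously the clients and the possible locations. A facility placement profile (FPP) is a vector $\mathbf{s}=(s_f)_{f\in F}$ with $s_f\in U(f)$ (several facilities may choose the same vertex); $S$ denotes the set of all FPPs. For a client $v$ let $N(v)=\{v\}\cup\{u:(v,u)\in E\}$ and $N_{\mathbf{s}}(v)=\{f\in F: s_f\in N(v)\}$. A client profile for $\mathbf{s}$ is $\sigma(\mathbf{s})$, assigning to each client $v$ numbers $\sigma(\mathbf{s})_{v,f}\in[0,1]$ ($f\in F$) with $\sigma(\mathbf{s})_{v,f}=0$ for $f\notin N_{\mathbf{s}}(v)$ and $\sum_{f\in N_{\mathbf{s}}(v)}\sigma(\mathbf{s})_{v,f}=1$ whenever $N_{\mathbf{s}}(v)\neq\varnothing$. A full client profile $\sigma$ specifies a client profile $\sigma(\mathbf{s}')$ for every $\mathbf{s}'\in S$. The load of facility $f$ is $\ell_f(\mathbf{s},\sigma)=\sum_{v\in V}\sigma(\mathbf{s})_{v,f}w(v)$. The cost of client $v$ is $L_v(\mathbf{s},\sigma)=w(v)+\sum_{f\in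 N_{\mathbf{s}}(v)}\sigma(\mathbf{s})_{v,f}\,\ell_{-v,f}(\mathbf{s},\sigma)$ where $\ell_{-v,f}(\mathbf{s},\sigma)=\sum_{u\neq v}\sigma(\mathbf{s})_{u,f}w(u)$. $\sigma(\mathbf{s})$ is a client equilibrium if no client $v$ can strictly decrease $L_v$ by unilaterally changing her own distribution to another feasible one; $\sigma$ is a full client equilibrium if $\sigma(\mathbf{s}')$ is a client equilibrium for every $\mathbf{s}'\in S$. For a real number $\alpha$, a pair $(\mathbf{s},\sigma)$ is an $\alpha$-approximate subgame perfect equilibrium if $\sigma$ is a full client equilibrium and there is no facility $f$ and location $s'_f\in U(f)$ with $\ell_f((s'_f,\mathbf{s}_{-f}),\sigma)>\alpha\cdot\ell_f(\mathbf{s},\sigma)$ (the paper considers $\alpha\ge 1$). *)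

theory Defs
  imports Complex_Main "HOL-Library.FuncSet"
begin

text \<open>Vertices (clients = locations) are natural numbers in a finite set V, the
directed edge set is E, weights w. A client profile
for a fixed FPP is a function cp :: vertex => facility => real; a full client
profile sigma maps every FPP to a client profile.\<close>

definition is_instance :: "nat set \<Rightarrow> (nat \<times> nat) set \<Rightarrow> (nat \<Rightarrow> real) \<Rightarrow> nat \<Rightarrow> (nat \<Rightarrow> nat set) \<Rightarrow> bool" where
  "is_instance V E w k U \<longleftrightarrow> finite V \<and> E \<subseteq> V \<times> V
     \<and> (\<forall>v\<in>V. w v \<in> \<rat> \<and> w v > 0)
     \<and> (\<forall>f\<in>{0..<k}. U f \<subseteq> V \<and> U f \<noteq> {})"

definition FPPs :: "nat \<Rightarrow> (nat \<Rightarrow> nat set) \<Rightarrow> (nat \<Rightarrow> nat) set" where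
  "FPPs k U = PiE {0..<k} U"

definition nbhd :: "(nat \<times> nat) set \<Rightarrow> nat \<Rightarrow> nat set" where
  "nbhd E v = {v} \<union> {u. (v, u) \<in> E}"

definition nbhd_fac :: "(nat \<times> nat) set \<Rightarrow> nat \<Rightarrow> (nat \<Rightarrow> nat) \<Rightarrow> nat \<Rightarrow> nat set" where
  "nbhd_fac E k s v = {f \<in> {0..<k}. s f \<in> nbhd E v}"

definition feasible_dist :: "(nat \<times> nat) set \<Rightarrow> nat \<Rightarrow> (nat \<Rightarrow> nat) \<Rightarrow> nat \<Rightarrow> (nat \<Rightarrow> real) \<Rightarrow> bool" where
  "feasible_dist E k s v d \<longleftrightarrow>
     (\<forall>f\<in>{0..<k}. 0 \<le> d f \<and> d f \<le> 1 \<and> (f \<notin> nbhd_fac E k s v \<longrightarrow> d f = 0))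
     \<and> (nbhd_fac E k s v \<noteq> {} \<longrightarrow> (\<Sum>f\<in>nbhd_fac E k s v. d f) = 1)"

definition client_profile :: "nat set \<Rightarrow> (nat \<times> nat) set \<Rightarrow> nat \<Rightarrow> (nat \<Rightarrow> nat) \<Rightarrow> (nat \<Rightarrow> nat \<Rightarrow> real) \<Rightarrow> bool" where
  "client_profile V E k s cp \<longleftrightarrow> (\<forall>v\<in>V. feasible_dist E k s v (cp v))"

definition load :: "nat set \<Rightarrow> (nat \<Rightarrow> real) \<Rightarrow> (nat \<Rightarrow> nat \<Rightarrow> real) \<Rightarrow> nat \<Rightarrow> real" where
  "load V w cp f = (\<Sum>v\<in>V. cp v f * w v)"

definition load_minus :: "nat set \<Rightarrow> (nat \<Rightarrow> real) \<Rightarrow> (nat \<Rightarrow> nat \<Rightarrow> real) \<Rightarrow> nat \<Rightarrow> nat \<Rightarrow> real" where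
  "load_minus V w cp v f = (\<Sum>u\<in>V - {v}. cp u f * w u)"

definition client_cost :: "nat set \<Rightarrow> (nat \<times> nat) set \<Rightarrow> (nat \<Rightarrow> real) \<Rightarrow> nat \<Rightarrow> (nat \<Rightarrow> nat) \<Rightarrow> (nat \<Rightarrow> nat \<Rightarrow> real) \<Rightarrow> nat \<Rightarrow> real" where
  "client_cost V E w k s cp v = w v + (\<Sum>f\<in>nbhd_fac E k s v. cp v f * load_minus V w cp v f)"

definition client_equilibrium :: "nat set \<Rightarrow> (nat \<times> nat) set \<Rightarrow> (nat \<Rightarrow> real) \<Rightarrow> nat \<Rightarrow> (nat \<Rightarrow> nat) \<Rightarrow> (nat \<Rightarrow> nat \<Rightarrow> real) \<Rightarrow> bool" where
  "client_equilibrium V E w k s cp \<longleftrightarrow> client_profile V E k s cp \<and>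
     (\<forall>v\<in>V. \<forall>d. feasible_dist E k s v d \<longrightarrow>
        \<not> (client_cost V E w k s (cp(v := d)) v < client_cost V E w k s cp v))"

definition full_client_equilibrium :: "nat set \<Rightarrow> (nat \<times> nat) set \<Rightarrow> (nat \<Rightarrow> real) \<Rightarrow> nat \<Rightarrow> (nat \<Rightarrow> nat set) \<Rightarrow> ((nat \<Rightarrow> nat) \<Rightarrow> nat \<Rightarrow> nat \<Rightarrow> real) \<Rightarrow> bool" where
  "full_client_equilibrium V E w k U \<sigma> \<longleftrightarrow> (\<forall>s'\<in>FPPs k U. client_equilibrium V E w k s' (\<sigma> s'))"

definition approx_SPE :: "real \<Rightarrow> nat set \<Rightarrow> (nat \<times> nat) set \<Rightarrow> (nat \<Rightarrow> real) \<Rightarrow> nat \<Rightarrow> (nat \<Rightarrow> nat set) \<Rightarrow> (nat \<Rightarrow> nat) \<Rightarrow> ((nat \<Rightarrow> nat) \<Rightarrow> nat \<Rightarrow> nat \<Rightarrow> real) \<Rightarrow> bool" where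
  "approx_SPE \<alpha> V E w k U s \<sigma> \<longleftrightarrow> s \<in> FPPs k U \<and> full_client_equilibrium V E w k U \<sigma> \<and>
     (\<forall>f\<in>{0..<k}. \<forall>x\<in>U f. \<not> (load V w (\<sigma> (s(f := x))) f > \<alpha> * load V w (\<sigma> s) f))"

end

theory Submission
  imports Defs
begin

definition V0 :: "nat set" where "V0 = {0,1,2,3,4,5}"
definition E0 :: "(nat \<times> nat) set" where "E0 = {(4,0),(4,3),(5,1),(5,2),(5,3)}"
definition w0 :: "nat \<Rightarrow> real" where
  "w0 v = (if v = 0 then 11 else if v = 1 then 12 else if v = 2 then 23 else
           if v = 3 then 1 else if v = 4 then 10 else 30)"
definition U0 :: "nat \<Rightarrow> nat set" where "U0 f = (if f = 0 then {0,1} else {2,3})"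

lemma V0m4: "V0 - {4} = {0,1,2,3,5}" by (auto simp: V0_def)
lemma V0m5: "V0 - {5} = {0,1,2,3,4}" by (auto simp: V0_def)

lemma nb0: "nbhd E0 0 = {0}" by (auto simp: nbhd_def E0_def)
lemma nb1: "nbhd E0 1 = {1}" by (auto simp: nbhd_def E0_def)
lemma nb2: "nbhd E0 2 = {2}" by (auto simp: nbhd_def E0_def)
lemma nb3: "nbhd E0 3 = {3}" by (auto simp: nbhd_def E0_def)
lemma nb4: "nbhd E0 4 = {4,0,3}" by (auto simp: nbhd_def E0_def)
lemma nb5: "nbhd E0 5 = {5,1,2,3}" by (auto simp: nbhd_def E0_def)
lemma nb1s: "nbhd E0 (Suc 0) = {1}" by (auto simp: nbhd_def E0_def)
lemmas nbs = nb0 nb1 nb1s nb2 nb3 nb4 nb5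

lemma nf: "nbhd_fac E 2 s v = {f. f < 2 \<and> s f \<in> nbhd E v}"
  by (auto simp: nbhd_fac_def)

lemma two_cases: "(f::nat) < 2 \<longleftrightarrow> f = 0 \<or> f = 1" by auto

lemma fd_only0:
  assumes "feasible_dist E 2 s v d" "s 0 \<in> nbhd E v" "s 1 \<notin> nbhd E v"
  shows "d 0 = 1 \<and> d 1 = 0"
proof -
  have "nbhd_fac E 2 s v = {0}" using assms(2,3) unfolding nf using less_2_cases by fastforce
  then show ?thesis using assms(1) unfolding feasible_dist_def by auto
qed

lemma fd_only1:
  assumes "feasible_dist E 2 s v d" "s 1 \<in> nbhd E v" "s 0 \<notin> nbhd E v"
  shows "d 0 = 0 \<and> d 1 = 1"
proof -
  have "nbhd_fac E 2 s v = {1}" using assms(2,3) unfolding nf using less_2_cases by fastforce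
  then show ?thesis using assms(1) unfolding feasible_dist_def by auto
qed

lemma fd_none:
  assumes "feasible_dist E 2 s v d" "s 1 \<notin> nbhd E v" "s 0 \<notin> nbhd E v"
  shows "d 0 = 0 \<and> d 1 = 0"
proof -
  have "nbhd_fac E 2 s v = {}" using assms(2,3) unfolding nf using less_2_cases by fastforce
  then show ?thesis using assms(1) unfolding feasible_dist_def by auto
qed

lemma lm_upd: "load_minus V w (cp(v := d)) v f = load_minus V w cp v f"
  unfolding load_minus_def by (rule sum.cong) auto

lemma real_aux:
  fixes a c x y :: real
  assumes "a + c = 1" "a * x + c * y \<le> x" "x < y"
  shows "c \<le> 0"
proof -
  have "(a + c) * x = x" using assms(1) by simp
  then have e: "a * x + c * x = x" by (simp add: distrib_right)
  have "c * (y - x) = c * y - c * x" by (simp add: right_diff_distrib)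
  then have "c * (y - x) \<le> 0" using assms(2) e by linarith
  then show ?thesis using assms(3) by (simp add: mult_le_0_iff)
qed

lemma ce_both:
  assumes ce: "client_equilibrium V E w 2 s cp" and v: "v \<in> V"
    and i: "s 0 \<in> nbhd E v" "s 1 \<in> nbhd E v"
    and g: "f < 2" "h < 2" "f \<noteq> h"
    and lt: "load_minus V w cp v f < load_minus V w cp v h"
  shows "cp v f = 1 \<and> cp v h = 0"
proof -
  have nfe: "nbhd_fac E 2 s v = {f, h}" using i g unfolding nf using less_2_cases by fastforce
  have fd: "feasible_dist E 2 s v (cp v)" using ce v
    unfolding client_equilibrium_def client_profile_def by auto
  have sum1: "cp v f + cp v h = 1" and nn: "0 \<le> cp v f" "cp v f \<le> 1" "0 \<le> cp v h"
    using fd g nfe unfolding feasible_dist_def by auto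
  define d where "d = (\<lambda>x::nat. if x = f then (1::real) else 0)"
  have fdd: "feasible_dist E 2 s v d" using nfe g unfolding feasible_dist_def d_def by auto
  have "\<not> client_cost V E w 2 s (cp(v := d)) v < client_cost V E w 2 s cp v"
    using ce v fdd unfolding client_equilibrium_def by auto
  moreover have "client_cost V E w 2 s (cp(v := d)) v = w v + load_minus V w cp v f"
    unfolding client_cost_def nfe using g by (simp add: lm_upd d_def)
  moreover have "client_cost V E w 2 s cp v = w v + cp v f * load_minus V w cp v f + cp v h * load_minus V w cp v h"
    unfolding client_cost_def nfe using g by simp
  ultimately have "load_minus V w cp v f \<ge> cp v f * load_minus V w cp v f + cp v h * load_minus V w cp v h"
    by linarith
  then have "cp v h \<le> 0" using real_aux[OF sum1 _ lt] by blast
  then show ?thesis using nn sum1 by auto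
qed


lemma st02:
  assumes ce: "client_equilibrium V0 E0 w0 2 s cp" and s: "s 0 = 0" "s 1 = 2"
  shows "load V0 w0 cp 0 = 21 \<and> load V0 w0 cp 1 = 53"
proof -
  have s1: "s (Suc 0) = 2" using s by simp
  have fd: "\<And>v. v \<in> V0 \<Longrightarrow> feasible_dist E0 2 s v (cp v)"
    using ce unfolding client_equilibrium_def client_profile_def by auto
  have c0: "cp 0 0 = 1 \<and> cp 0 1 = 0"
    by (rule fd_only0[OF fd]) (auto simp: V0_def nbs s s1)
  have c1: "cp 1 0 = 0 \<and> cp 1 1 = 0"
    by (rule fd_none[OF fd]) (auto simp: V0_def nbs s s1)
  have c2: "cp 2 0 = 0 \<and> cp 2 1 = 1"
    by (rule fd_only1[OF fd]) (auto simp: V0_def nbs s s1)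
  have c3: "cp 3 0 = 0 \<and> cp 3 1 = 0"
    by (rule fd_none[OF fd]) (auto simp: V0_def nbs s s1)
  have c4: "cp 4 0 = 1 \<and> cp 4 1 = 0"
    by (rule fd_only0[OF fd]) (auto simp: V0_def nbs s s1)
  have c5: "cp 5 0 = 0 \<and> cp 5 1 = 1"
    by (rule fd_only1[OF fd]) (auto simp: V0_def nbs s s1)
  show ?thesis using c0 c1 c2 c3 c4 c5 by (simp add: load_def V0_def w0_def)
qed

lemma st03:
  assumes ce: "client_equilibrium V0 E0 w0 2 s cp" and s: "s 0 = 0" "s 1 = 3"
  shows "load V0 w0 cp 0 = 21 \<and> load V0 w0 cp 1 = 31"
proof -
  have s1: "s (Suc 0) = 3" using s by simp
  have fd: "\<And>v. v \<in> V0 \<Longrightarrow> feasible_dist E0 2 s v (cp v)"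
    using ce unfolding client_equilibrium_def client_profile_def by auto
  have c0: "cp 0 0 = 1 \<and> cp 0 1 = 0"
    by (rule fd_only0[OF fd]) (auto simp: V0_def nbs s s1)
  have c1: "cp 1 0 = 0 \<and> cp 1 1 = 0"
    by (rule fd_none[OF fd]) (auto simp: V0_def nbs s s1)
  have c2: "cp 2 0 = 0 \<and> cp 2 1 = 0"
    by (rule fd_none[OF fd]) (auto simp: V0_def nbs s s1)
  have c3: "cp 3 0 = 0 \<and> cp 3 1 = 1"
    by (rule fd_only1[OF fd]) (auto simp: V0_def nbs s s1)
  have c5: "cp 5 0 = 0 \<and> cp 5 1 = 1"
    by (rule fd_only1[OF fd]) (auto simp: V0_def nbs s s1)
  have lm0: "load_minus V0 w0 cp 4 0 < load_minus V0 w0 cp 4 1"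
    using c0 c1 c2 c3 c5 by (simp add: load_minus_def V0m4 V0m5 w0_def)
  have c4: "cp 4 0 = 1 \<and> cp 4 1 = 0"
    by (rule ce_both[OF ce _ _ _ _ _ _ lm0]) (auto simp: V0_def nbs s s1)
  show ?thesis using c0 c1 c2 c3 c5 c4 by (simp add: load_def V0_def w0_def)
qed

lemma st12:
  assumes ce: "client_equilibrium V0 E0 w0 2 s cp" and s: "s 0 = 1" "s 1 = 2"
  shows "load V0 w0 cp 0 = 42 \<and> load V0 w0 cp 1 = 23"
proof -
  have s1: "s (Suc 0) = 2" using s by simp
  have fd: "\<And>v. v \<in> V0 \<Longrightarrow> feasible_dist E0 2 s v (cp v)"
    using ce unfolding client_equilibrium_def client_profile_def by auto
  have c0: "cp 0 0 = 0 \<and> cp 0 1 = 0"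
    by (rule fd_none[OF fd]) (auto simp: V0_def nbs s s1)
  have c1: "cp 1 0 = 1 \<and> cp 1 1 = 0"
    by (rule fd_only0[OF fd]) (auto simp: V0_def nbs s s1)
  have c2: "cp 2 0 = 0 \<and> cp 2 1 = 1"
    by (rule fd_only1[OF fd]) (auto simp: V0_def nbs s s1)
  have c3: "cp 3 0 = 0 \<and> cp 3 1 = 0"
    by (rule fd_none[OF fd]) (auto simp: V0_def nbs s s1)
  have c4: "cp 4 0 = 0 \<and> cp 4 1 = 0"
    by (rule fd_none[OF fd]) (auto simp: V0_def nbs s s1)
  have lm0: "load_minus V0 w0 cp 5 0 < load_minus V0 w0 cp 5 1"
    using c0 c1 c2 c3 c4 by (simp add: load_minus_def V0m4 V0m5 w0_def)
  have c5: "cp 5 0 = 1 \<and> cp 5 1 = 0"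
    by (rule ce_both[OF ce _ _ _ _ _ _ lm0]) (auto simp: V0_def nbs s s1)
  show ?thesis using c0 c1 c2 c3 c4 c5 by (simp add: load_def V0_def w0_def)
qed

lemma st13:
  assumes ce: "client_equilibrium V0 E0 w0 2 s cp" and s: "s 0 = 1" "s 1 = 3"
  shows "load V0 w0 cp 0 = 12 \<and> load V0 w0 cp 1 = 41"
proof -
  have s1: "s (Suc 0) = 3" using s by simp
  have fd: "\<And>v. v \<in> V0 \<Longrightarrow> feasible_dist E0 2 s v (cp v)"
    using ce unfolding client_equilibrium_def client_profile_def by auto
  have c0: "cp 0 0 = 0 \<and> cp 0 1 = 0"
    by (rule fd_none[OF fd]) (auto simp: V0_def nbs s s1)
  have c1: "cp 1 0 = 1 \<and> cp 1 1 = 0"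
    by (rule fd_only0[OF fd]) (auto simp: V0_def nbs s s1)
  have c2: "cp 2 0 = 0 \<and> cp 2 1 = 0"
    by (rule fd_none[OF fd]) (auto simp: V0_def nbs s s1)
  have c3: "cp 3 0 = 0 \<and> cp 3 1 = 1"
    by (rule fd_only1[OF fd]) (auto simp: V0_def nbs s s1)
  have c4: "cp 4 0 = 0 \<and> cp 4 1 = 1"
    by (rule fd_only1[OF fd]) (auto simp: V0_def nbs s s1)
  have lm0: "load_minus V0 w0 cp 5 1 < load_minus V0 w0 cp 5 0"
    using c0 c1 c2 c3 c4 by (simp add: load_minus_def V0m4 V0m5 w0_def)
  have c5: "cp 5 1 = 1 \<and> cp 5 0 = 0"
    by (rule ce_both[OF ce _ _ _ _ _ _ lm0]) (auto simp: V0_def nbs s s1)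
  show ?thesis using c0 c1 c2 c3 c4 c5 by (simp add: load_def V0_def w0_def)
qed

lemma sqrt5_lt: "sqrt 5 < 12/5"
proof -
  have "sqrt 5 < sqrt ((12/5)^2)" by (subst real_sqrt_less_iff) (simp add: power2_eq_square)
  then show ?thesis by simp
qed

lemma upd_FPP:
  assumes "s \<in> FPPs 2 U0" "f < 2" "x \<in> U0 f"
  shows "s(f := x) \<in> FPPs 2 U0"
proof -
  have "s(f := x) \<in> PiE (insert f {0..<2}) U0"
    using assms unfolding FPPs_def by (intro PiE_fun_upd) auto
  moreover have "insert f {0..<2} = {0..<(2::nat)}" using assms(2) by auto
  ultimately show ?thesis unfolding FPPs_def by simp
qed

theorem mainTheorem3:
  fixes \<epsilon> :: real
  assumes "\<epsilon> > 0"
  shows "\<exists>V E w k U. is_instance V E w k U \<and>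
           \<not> (\<exists>s \<sigma>. approx_SPE ((1 + sqrt 5) / 2 - \<epsilon>) V E w k U s \<sigma>)"
proof -
  define a where "a = (1 + sqrt 5) / 2 - \<epsilon>"
  have al: "a < 17/10" using sqrt5_lt assms unfolding a_def by (simp add: field_simps)
  have inst: "is_instance V0 E0 w0 2 U0"
    unfolding is_instance_def V0_def E0_def w0_def U0_def by auto
  have "\<not> (\<exists>s \<sigma>. approx_SPE a V0 E0 w0 2 U0 s \<sigma>)"
  proof
    assume "\<exists>s \<sigma>. approx_SPE a V0 E0 w0 2 U0 s \<sigma>"
    then obtain s \<sigma> where A: "approx_SPE a V0 E0 w0 2 U0 s \<sigma>" by blast
    have sF: "s \<in> FPPs 2 U0" and fce: "full_client_equilibrium V0 E0 w0 2 U0 \<sigma>"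
      and dev: "\<forall>f\<in>{0..<2}. \<forall>x\<in>U0 f. \<not> (load V0 w0 (\<sigma> (s(f := x))) f > a * load V0 w0 (\<sigma> s) f)"
      using A unfolding approx_SPE_def by auto
    have ce: "\<And>s'. s' \<in> FPPs 2 U0 \<Longrightarrow> client_equilibrium V0 E0 w0 2 s' (\<sigma> s')"
      using fce unfolding full_client_equilibrium_def by auto
    have s0: "s 0 = 0 \<or> s 0 = 1" using PiE_mem[OF sF[unfolded FPPs_def], of 0] by (auto simp: U0_def)
    have s1: "s 1 = 2 \<or> s 1 = 3" using PiE_mem[OF sF[unfolded FPPs_def], of 1] by (auto simp: U0_def)
    have ceS: "client_equilibrium V0 E0 w0 2 s (\<sigma> s)" using ce sF by blast
    have ce0: "\<And>x. x \<in> U0 0 \<Longrightarrow> client_equilibrium V0 E0 w0 2 (s(0 := x)) (\<sigma> (s(0 := x)))"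
      using ce upd_FPP[OF sF] by simp
    have ce1: "\<And>x. x \<in> U0 1 \<Longrightarrow> client_equilibrium V0 E0 w0 2 (s(1 := x)) (\<sigma> (s(1 := x)))"
      using ce upd_FPP[OF sF] by simp
    have d0: "\<And>x. x \<in> U0 0 \<Longrightarrow> \<not> (load V0 w0 (\<sigma> (s(0 := x))) 0 > a * load V0 w0 (\<sigma> s) 0)"
      using dev by auto
    have d1: "\<And>x. x \<in> U0 1 \<Longrightarrow> \<not> (load V0 w0 (\<sigma> (s(1 := x))) 1 > a * load V0 w0 (\<sigma> s) 1)"
      using dev by auto
    have u01: "1 \<in> U0 0" "0 \<in> U0 0" and u11: "2 \<in> U0 1" "3 \<in> U0 1" by (auto simp: U0_def)
    from s0 s1 show False
    proof (elim disjE)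
      assume h: "s 0 = 0" "s 1 = 2"
      have L: "load V0 w0 (\<sigma> s) 0 = 21" using st02[OF ceS h] by simp
      have L': "load V0 w0 (\<sigma> (s(0 := 1))) 0 = 42" using st12[OF ce0[OF u01(1)]] h by simp
      show False using d0[OF u01(1)] L L' al by simp
    next
      assume h: "s 0 = 0" "s 1 = 3"
      have L: "load V0 w0 (\<sigma> s) 1 = 31" using st03[OF ceS h] by simp
      have L': "load V0 w0 (\<sigma> (s(1 := 2))) 1 = 53" using st02[OF ce1[OF u11(1)]] h by simp
      show False using d1[OF u11(1)] L L' al by simp
    next
      assume h: "s 0 = 1" "s 1 = 2"
      have L: "load V0 w0 (\<sigma> s) 1 = 23" using st12[OF ceS h] by simp
      have L': "load V0 w0 (\<sigma> (s(1 := 3))) 1 = 41" using st13[OF ce1[OF u11(2)]] h by simp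
      show False using d1[OF u11(2)] L L' al by simp
    next
      assume h: "s 0 = 1" "s 1 = 3"
      have L: "load V0 w0 (\<sigma> s) 0 = 12" using st13[OF ceS h] by simp
      have L': "load V0 w0 (\<sigma> (s(0 := 0))) 0 = 21" using st03[OF ce0[OF u01(2)]] h by simp
      show False using d0[OF u01(2)] L L' al by simp
    qed
  qed
  then show ?thesis using inst unfolding a_def by blast
qed

end
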